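(* Let $X$ be a real Banach space, $x\in S_X$, $\delta\ge0$ and $0<t_1<t_2$. Then (1) $Q_{B_X}(t_2x,\delta)\subseteq Q_{B_X}(t_1x,\delta)\subseteq Q_{B_X}(t_2x,\frac{t_2}{t_1}\delta)$; (2) $Q_{S_X}(t_2x,\delta)\subseteq Q_{S_X}(t_1x,\delta)\subseteq Q_{S_X}(t_2x,\frac{t_2}{t_1}\delta)$.
   Context: $B_X,S_X$ are the closed unit ball and unit sphere. For non-empty bounded $F$ and $y\in X$, $r(F,y)=\sup_{z\in F}\|y-z\|$ and $Q_F(y,\delta)=\{z\in F:\|y-z\|\ge r(F,y)-\delta\}$. *)

theory Defs
  imports "HOL-Analysis.Analysis"
begin

definition rad :: "'a::real_normed_vector set \<Rightarrow> 'a \<Rightarrow> real" where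
  "rad F y = (SUP z\<in>F. norm (y - z))"

definition Qset :: "'a::real_normed_vector set \<Rightarrow> 'a \<Rightarrow> real \<Rightarrow> 'a set" where
  "Qset F y \<delta> = {z \<in> F. norm (y - z) \<ge> rad F y - \<delta>}"

end

theory Submission
  imports Defs
begin

lemma rad_eq:
  fixes x :: "'a::real_normed_vector"
  assumes "norm x = 1" "t \<ge> 0" "F \<subseteq> cball 0 1" "-x \<in> F"
  shows "rad F (t *\<^sub>R x) = 1 + t"
  unfolding rad_def
proof (rule antisym)
  have b: "norm (t *\<^sub>R x - z) \<le> 1 + t" if "z \<in> F" for z
  proof -
    have "norm (t *\<^sub>R x - z) \<le> norm (t *\<^sub>R x) + norm z" by (rule norm_triangle_ineq4)
    also have "\<dots> \<le> t + 1" using assms that by auto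
    finally show ?thesis by simp
  qed
  show "(SUP z\<in>F. norm (t *\<^sub>R x - z)) \<le> 1 + t"
    using assms(4) b by (intro cSUP_least) auto
  have "norm (t *\<^sub>R x - (-x)) = 1 + t"
  proof -
    have "t *\<^sub>R x - (-x) = (1 + t) *\<^sub>R x" by (simp add: algebra_simps)
    thus ?thesis using assms by simp
  qed
  moreover have "norm (t *\<^sub>R x - (-x)) \<le> (SUP z\<in>F. norm (t *\<^sub>R x - z))"
    using assms(4) b by (intro cSUP_upper) (auto intro!: bdd_aboveI2)
  ultimately show "1 + t \<le> (SUP z\<in>F. norm (t *\<^sub>R x - z))" by simp
qed

lemma incl1:
  fixes x :: "'a::real_normed_vector"
  assumes "norm x = 1" "0 < t1" "t1 < t2" "F \<subseteq> cball 0 1" "-x \<in> F"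
  shows "Qset F (t2 *\<^sub>R x) \<delta> \<subseteq> Qset F (t1 *\<^sub>R x) \<delta>"
proof
  fix z assume z: "z \<in> Qset F (t2 *\<^sub>R x) \<delta>"
  have r1: "rad F (t1 *\<^sub>R x) = 1 + t1" and r2: "rad F (t2 *\<^sub>R x) = 1 + t2"
    using rad_eq[OF assms(1) _ assms(4,5)] assms by auto
  have "norm (t2 *\<^sub>R x - z) \<le> norm (t1 *\<^sub>R x - z) + norm ((t2 - t1) *\<^sub>R x)"
  proof -
    have "t2 *\<^sub>R x - z = (t1 *\<^sub>R x - z) + (t2 - t1) *\<^sub>R x" by (simp add: algebra_simps)
    thus ?thesis by (metis norm_triangle_ineq)
  qed
  also have "norm ((t2 - t1) *\<^sub>R x) = t2 - t1" using assms by simp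
  finally show "z \<in> Qset F (t1 *\<^sub>R x) \<delta>" using z r1 r2 unfolding Qset_def by auto
qed

lemma incl2:
  fixes x :: "'a::real_normed_vector"
  assumes "norm x = 1" "0 < t1" "t1 < t2" "F \<subseteq> cball 0 1" "-x \<in> F"
  shows "Qset F (t1 *\<^sub>R x) \<delta> \<subseteq> Qset F (t2 *\<^sub>R x) ((t2 / t1) * \<delta>)"
proof
  fix z assume z: "z \<in> Qset F (t1 *\<^sub>R x) \<delta>"
  have r1: "rad F (t1 *\<^sub>R x) = 1 + t1" and r2: "rad F (t2 *\<^sub>R x) = 1 + t2"
    using rad_eq[OF assms(1) _ assms(4,5)] assms by auto
  have zF: "z \<in> F" and zn: "norm (t1 *\<^sub>R x - z) \<ge> 1 + t1 - \<delta>" using z r1 unfolding Qset_def by auto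
  have nz: "norm z \<le> 1" using zF assms(4) by auto
  have eq: "t1 *\<^sub>R x - z = (t1 / t2) *\<^sub>R (t2 *\<^sub>R x - z) + (1 - t1 / t2) *\<^sub>R (- z)"
    using assms by (simp add: algebra_simps)
  have "norm (t1 *\<^sub>R x - z) \<le> (t1 / t2) * norm (t2 *\<^sub>R x - z) + (1 - t1 / t2) * norm z"
  proof -
    have "norm (t1 *\<^sub>R x - z) \<le> norm ((t1 / t2) *\<^sub>R (t2 *\<^sub>R x - z)) + norm ((1 - t1 / t2) *\<^sub>R (- z))"
      unfolding eq by (rule norm_triangle_ineq)
    also have "\<dots> = (t1 / t2) * norm (t2 *\<^sub>R x - z) + (1 - t1 / t2) * norm z"
      using assms by simp
    finally show ?thesis .
  qed
  also have "\<dots> \<le> (t1 / t2) * norm (t2 *\<^sub>R x - z) + (1 - t1 / t2)"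
    using nz assms by (simp add: mult_left_le)
  finally have "1 + t1 - \<delta> \<le> (t1 / t2) * norm (t2 *\<^sub>R x - z) + (1 - t1 / t2)" using zn by linarith
  moreover have "(t1 / t2) * (1 + t2 - (t2 / t1) * \<delta>) = t1 / t2 + t1 - \<delta>"
    using assms by (simp add: field_simps)
  ultimately have "(t1 / t2) * (1 + t2 - (t2 / t1) * \<delta>) \<le> (t1 / t2) * norm (t2 *\<^sub>R x - z)"
    by linarith
  moreover have "0 < t1 / t2" using assms by simp
  ultimately have "1 + t2 - (t2 / t1) * \<delta> \<le> norm (t2 *\<^sub>R x - z)"
    using mult_le_cancel_left_pos by blast
  thus "z \<in> Qset F (t2 *\<^sub>R x) ((t2 / t1) * \<delta>)" using zF r2 unfolding Qset_def by auto
qed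

theorem lemma2p13:
  fixes x :: "'a::banach" and \<delta> t1 t2 :: real
  assumes "x \<in> sphere 0 1" and "\<delta> \<ge> 0" and "0 < t1" and "t1 < t2"
  shows "Qset (cball 0 1) (t2 *\<^sub>R x) \<delta> \<subseteq> Qset (cball 0 1) (t1 *\<^sub>R x) \<delta>
       \<and> Qset (cball 0 1) (t1 *\<^sub>R x) \<delta> \<subseteq> Qset (cball 0 1) (t2 *\<^sub>R x) ((t2 / t1) * \<delta>)
       \<and> Qset (sphere 0 1) (t2 *\<^sub>R x) \<delta> \<subseteq> Qset (sphere 0 1) (t1 *\<^sub>R x) \<delta>
       \<and> Qset (sphere 0 1) (t1 *\<^sub>R x) \<delta> \<subseteq> Qset (sphere 0 1) (t2 *\<^sub>R x) ((t2 / t1) * \<delta>)"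
proof -
  have n: "norm x = 1" using assms(1) by simp
  have a: "-x \<in> cball 0 1" "-x \<in> sphere 0 1" "sphere (0::'a) 1 \<subseteq> cball 0 1" using n by auto
  show ?thesis
    using incl1[OF n assms(3,4) order_refl a(1)] incl2[OF n assms(3,4) order_refl a(1)]
      incl1[OF n assms(3,4) a(3) a(2)] incl2[OF n assms(3,4) a(3) a(2)] by blast
qed

end
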